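(* For every $\epsilon>0$ there exists $k_0$ such that every zero-error variable-length $(k,N)$ network code for the network in the context with $k\ge k_0$ has rate $$\frac{k}{\mathrm E N\,\log_2|\mathcal Z|}\ \le\ \frac{8}{9}+\epsilon .$$ More precisely, every zero-error $(k,N)$ code satisfies $\frac{k}{\mathrm EN\log_2|\mathcal Z|}\le \frac{H(N)}{\mathrm EN\log_2|\mathcal Z|}+\frac{2}{2.25}$ up to a correction term vanishing as $k\to\infty$, where $2.25=H(\boldsymbol\Sigma(1))+0.75(\log_23-1)$.
   Context: Network: sources $s_1,s_2,s_3$, terminal $t$, edges $(s_3,s_1),(s_3,s_2),(s_1,t),(s_2,t)$; $s_j$ observes $\mathbf X_j\in\{0,1\}^k$, all $3k$ bits i.i.d. uniform on $\{0,1\}$; $s_1,s_2$ receive $\mathbf X_3$. $\mathcal Z$ is a finite alphabet, $|\mathcal Z|\ge2$. A variable-length $(k,N)$ network code: encoders $\phi_1,\phi_2:\{0,1\}^k\times\{0,1\}^k\to\mathcal Z^*$ (finite sequences over $\mathcal Z$) giving $\mathbf Z_1=\phi_1(\mathbf X_1,\mathbf X_3)$ on edge $(s_1,t)$ and $\mathbf Z_2=\phi_2(\mathbf X_2,\mathbf X_3)$ on edge $(s_2,t)$; a positive-integer-valued stopping time $N$ with $\mathrm EN<\infty$ for the sequence of pairs $(\mathbf Z_1(m),\mathbf Z_2(m))_{m\ge1}$; a decoder $\hat{\boldsymbol\Sigma}=\psi(\mathbf Z_1^N,\mathbf Z_2^N)\in\{0,1,2,3\}^k$ with $\mathbf Z_j^N$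 the first $N$ symbols. $\boldsymbol\Sigma=\mathbf X_1+\mathbf X_2+\mathbf X_3$ (componentwise integer sum); zero-error means $\Pr(\hat{\boldsymbol\Sigma}\neq\boldsymbol\Sigma)=0$. The rate of the code is $k/(\mathrm EN\log_2|\mathcal Z|)$ and the computing capacity $\mathcal C$ is the supremum of rates of zero-error codes. $H$ is Shannon entropy in bits. *)

theory Defs
  imports Complex_Main
begin

definition bitvecs :: "nat \<Rightarrow> nat list set" where
  "bitvecs k = {xs. length xs = k \<and> set xs \<subseteq> {0, 1}}"

definition vsum3 :: "nat list \<Rightarrow> nat list \<Rightarrow> nat list \<Rightarrow> nat list" where
  "vsum3 x1 x2 x3 = map (\<lambda>((a, b), c). a + b + c) (zip (zip x1 x2) x3)"

text \<open>A zero-error variable-length (k,N) network code for the network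
  s3 -> s1, s3 -> s2, s1 -> t, s2 -> t.  Encoders phi1, phi2 output finite
  sequences over the alphabet 'z; the stopping time N is a (deterministic)
  function of the sources; the event N = n is determined by the first n
  symbols of both edge sequences; N is a positive integer not exceeding the
  length of either sequence (so the first N symbols exist); the decoder psi
  recovers Sigma from the first N symbols with zero error (every source
  realisation has positive probability).\<close>
definition zero_error_vl_code ::
  "nat \<Rightarrow> (nat list \<Rightarrow> nat list \<Rightarrow> 'z list) \<Rightarrow> (nat list \<Rightarrow> nat list \<Rightarrow> 'z list)
   \<Rightarrow> (nat list \<Rightarrow> nat list \<Rightarrow> nat list \<Rightarrow> nat) \<Rightarrow> ('z list \<Rightarrow> 'z list \<Rightarrow> nat list) \<Rightarrow> bool" where
  "zero_error_vl_code k \<phi>1 \<phi>2 N \<psi> \<longleftrightarrow>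
     (\<forall>x1\<in>bitvecs k. \<forall>x2\<in>bitvecs k. \<forall>x3\<in>bitvecs k.
        1 \<le> N x1 x2 x3 \<and>
        N x1 x2 x3 \<le> length (\<phi>1 x1 x3) \<and>
        N x1 x2 x3 \<le> length (\<phi>2 x2 x3) \<and>
        \<psi> (take (N x1 x2 x3) (\<phi>1 x1 x3)) (take (N x1 x2 x3) (\<phi>2 x2 x3)) = vsum3 x1 x2 x3) \<and>
     (\<forall>x1\<in>bitvecs k. \<forall>x2\<in>bitvecs k. \<forall>x3\<in>bitvecs k.
      \<forall>y1\<in>bitvecs k. \<forall>y2\<in>bitvecs k. \<forall>y3\<in>bitvecs k. \<forall>n.
        take n (\<phi>1 x1 x3) = take n (\<phi>1 y1 y3) \<and> take n (\<phi>2 x2 x3) = take n (\<phi>2 y2 y3)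
        \<longrightarrow> (N x1 x2 x3 = n \<longleftrightarrow> N y1 y2 y3 = n))"

definition expected_N :: "nat \<Rightarrow> (nat list \<Rightarrow> nat list \<Rightarrow> nat list \<Rightarrow> nat) \<Rightarrow> real" where
  "expected_N k N =
     (\<Sum>x1\<in>bitvecs k. \<Sum>x2\<in>bitvecs k. \<Sum>x3\<in>bitvecs k. real (N x1 x2 x3)) / 2 ^ (3 * k)"

end

theory Submission
  imports Defs
begin


lemma bitvecs_alt: "bitvecs k = {xs. set xs \<subseteq> {0,1} \<and> length xs = k}"
  by (auto simp: bitvecs_def)

lemma finite_bitvecs[simp]: "finite (bitvecs k)"
  unfolding bitvecs_alt by (rule finite_lists_length_eq) simp

lemma card_bitvecs: "card (bitvecs k) = 2 ^ k"
  unfolding bitvecs_alt by (subst card_lists_length_eq) (simp_all add: numeral_2_eq_2)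

lemma bitvecs_Suc: "bitvecs (Suc k) = (\<lambda>(b,xs). b#xs) ` ({0,1} \<times> bitvecs k)"
proof (rule set_eqI)
  fix ys show "ys \<in> bitvecs (Suc k) \<longleftrightarrow> ys \<in> (\<lambda>(b,xs). b#xs) ` ({0,1} \<times> bitvecs k)"
    by (cases ys) (auto simp: bitvecs_def image_iff)
qed

lemma sum_bitvecs_Suc:
  "sum f (bitvecs (Suc k)) = (\<Sum>xs\<in>bitvecs k. f (0#xs) + f (1#xs))"
proof -
  have inj: "inj_on (\<lambda>(b::nat,xs). b#xs) ({0,1} \<times> bitvecs k)" by (auto simp: inj_on_def)
  have "sum f (bitvecs (Suc k)) = (\<Sum>p\<in>{0::nat,1} \<times> bitvecs k. f ((\<lambda>(b,xs). b#xs) p))"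
    unfolding bitvecs_Suc by (subst sum.reindex[OF inj]) (simp add: comp_def)
  also have "\<dots> = (\<Sum>(b,xs)\<in>{0::nat,1} \<times> bitvecs k. f (b#xs))"
    by (rule sum.cong) auto
  also have "\<dots> = (\<Sum>b\<in>{0::nat,1}. \<Sum>xs\<in>bitvecs k. f (b#xs))"
    by (simp add: sum.cartesian_product)
  also have "\<dots> = (\<Sum>xs\<in>bitvecs k. f (0#xs) + f (1#xs))"
    by (simp add: sum.distrib)
  finally show ?thesis .
qed

lemma bitvecs_Nil[simp]: "bitvecs 0 = {[]}" by (auto simp: bitvecs_def)

lemma vsum3_Nil[simp]: "vsum3 [] y z = []" "vsum3 x [] z = []" "vsum3 x y [] = []"
  by (auto simp: vsum3_def)
lemma vsum3_Cons[simp]: "vsum3 (a#x) (b#y) (c#z) = (a+b+c) # vsum3 x y z"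
  by (simp add: vsum3_def)
lemma length_vsum3: "length (vsum3 x y z) = min (length x) (min (length y) (length z))"
  by (simp add: vsum3_def)
lemma nth_vsum3: "i < length x \<Longrightarrow> i < length y \<Longrightarrow> i < length z \<Longrightarrow> vsum3 x y z ! i = x!i + y!i + z!i"
  by (simp add: vsum3_def)

lemma vsum3_cancel2:
  assumes "length y = length x" "length y' = length x" "length z = length x" "vsum3 x y z = vsum3 x y' z"
  shows "y = y'"
proof (rule nth_equalityI)
  show "length y = length y'" using assms by simp
  fix i assume "i < length y"
  then have i: "i < length x" "i < length y" "i < length y'" "i < length z" using assms by simp_all
  have "x!i + y!i + z!i = vsum3 x y z ! i" using i by (simp add: nth_vsum3)
  also have "\<dots> = vsum3 x y' z ! i" by (simp only: assms(4))
  also have "\<dots> = x!i + y'!i + z!i" using i by (simp add: nth_vsum3)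
  finally show "y!i = y'!i" by simp
qed

lemma vsum3_cancel1:
  assumes "length y = length x" "length x' = length x" "length z = length x" "vsum3 x y z = vsum3 x' y z"
  shows "x = x'"
proof (rule nth_equalityI)
  show "length x = length x'" using assms by simp
  fix i assume "i < length x"
  then have i: "i < length x" "i < length y" "i < length x'" "i < length z" using assms by simp_all
  have "x!i + y!i + z!i = vsum3 x y z ! i" using i by (simp add: nth_vsum3)
  also have "\<dots> = vsum3 x' y z ! i" by (simp only: assms(4))
  also have "\<dots> = x'!i + y!i + z!i" using i by (simp add: nth_vsum3)
  finally show "x!i = x'!i" by simp
qed

definition mm :: "nat list \<Rightarrow> nat" where "mm s = length (filter (\<lambda>a. a \<noteq> 0 \<and> a \<noteq> 3) s)"
definition compat :: "nat list \<Rightarrow> nat list \<Rightarrow> bool" where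
  "compat s c = list_all2 (\<lambda>a b. (a = 0 \<longrightarrow> b = 0) \<and> (a = 3 \<longrightarrow> b = 1)) s c"

lemma compat_vsum3:
  assumes "x1 \<in> bitvecs k" "x2 \<in> bitvecs k" "x3 \<in> bitvecs k"
  shows "compat (vsum3 x1 x2 x3) x3"
  unfolding compat_def list_all2_conv_all_nth
proof (rule conjI)
  show "length (vsum3 x1 x2 x3) = length x3" using assms by (simp add: bitvecs_def length_vsum3)
  show "\<forall>i<length (vsum3 x1 x2 x3). (vsum3 x1 x2 x3 ! i = 0 \<longrightarrow> x3 ! i = 0) \<and> (vsum3 x1 x2 x3 ! i = 3 \<longrightarrow> x3 ! i = 1)"
  proof (intro allI impI)
  fix i assume "i < length (vsum3 x1 x2 x3)"
  then have i: "i < k" using assms by (simp add: bitvecs_def length_vsum3)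
  have m: "x1!i \<in> set x1" "x2!i \<in> set x2" "x3!i \<in> set x3" using assms i by (auto simp: bitvecs_def)
  have s: "set x1 \<subseteq> {0,1}" "set x2 \<subseteq> {0,1}" "set x3 \<subseteq> {0,1}" using assms by (auto simp: bitvecs_def)
  have b: "x1!i \<in> {0,1}" "x2!i \<in> {0,1}" "x3!i \<in> {0,1}" using m s by blast+
  show "(vsum3 x1 x2 x3 ! i = 0 \<longrightarrow> x3 ! i = 0) \<and> (vsum3 x1 x2 x3 ! i = 3 \<longrightarrow> x3 ! i = 1)"
    using assms i b by (auto simp: bitvecs_def nth_vsum3)
  qed
qed

lemma card_compat: "card {c \<in> bitvecs (length s). compat s c} \<le> 2 ^ mm s"
proof (induction s)
  case Nil
  show ?case by (simp add: compat_def mm_def)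
next
  case (Cons a s)
  let ?P = "\<lambda>b. (a = 0 \<longrightarrow> b = 0) \<and> (a = 3 \<longrightarrow> b = (1::nat))"
  have eq: "{c \<in> bitvecs (length (a#s)). compat (a#s) c}
      = (\<lambda>(b,xs). b#xs) ` ({b\<in>{0,1}. ?P b} \<times> {c \<in> bitvecs (length s). compat s c})"
  proof (rule set_eqI)
    fix c
    show "c \<in> {c \<in> bitvecs (length (a#s)). compat (a#s) c} \<longleftrightarrow>
      c \<in> (\<lambda>(b,xs). b#xs) ` ({b\<in>{0,1}. ?P b} \<times> {c \<in> bitvecs (length s). compat s c})"
    proof (cases c)
      case Nil then show ?thesis by (auto simp: bitvecs_def)
    next
      case (Cons b xs)
      have "c \<in> (\<lambda>(b,xs). b#xs) ` ({b\<in>{0,1}. ?P b} \<times> {c \<in> bitvecs (length s). compat s c})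
         \<longleftrightarrow> b \<in> {0,1} \<and> ?P b \<and> xs \<in> bitvecs (length s) \<and> compat s xs"
        unfolding Cons by (auto simp: image_iff)
      moreover have "c \<in> {c \<in> bitvecs (length (a#s)). compat (a#s) c}
         \<longleftrightarrow> b \<in> {0,1} \<and> ?P b \<and> xs \<in> bitvecs (length s) \<and> compat s xs"
        unfolding Cons by (auto simp: bitvecs_def compat_def)
      ultimately show ?thesis by simp
    qed
  qed
  have cb: "card {b\<in>{0::nat,1}. ?P b} \<le> (if a = 0 \<or> a = 3 then 1 else 2)"
  proof (cases "a = 0 \<or> a = 3")
    case True
    then have "{b\<in>{0::nat,1}. ?P b} \<subseteq> {if a = 0 then 0 else 1}" by auto
    then have "card {b\<in>{0::nat,1}. ?P b} \<le> card {if a = 0 then 0 else (1::nat)}"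
      by (rule card_mono[rotated]) simp
    then show ?thesis using True by simp
  next
    case False
    have "card {b\<in>{0::nat,1}. ?P b} \<le> card {0::nat,1}" by (rule card_mono) auto
    then show ?thesis using False by simp
  qed
  have "card {c \<in> bitvecs (length (a#s)). compat (a#s) c}
      \<le> card ({b\<in>{0::nat,1}. ?P b} \<times> {c \<in> bitvecs (length s). compat s c})"
    unfolding eq by (rule card_image_le) simp
  also have "\<dots> = card {b\<in>{0::nat,1}. ?P b} * card {c \<in> bitvecs (length s). compat s c}"
    by (rule card_cartesian_product)
  also have "\<dots> \<le> (if a = 0 \<or> a = 3 then 1 else 2) * 2 ^ mm s"
    by (rule mult_mono[OF cb Cons.IH]) simp_all
  also have "\<dots> = 2 ^ mm (a#s)" by (simp add: mm_def)
  finally show ?case .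
qed

lemma mm_Cons: "mm (a#s) = (if a = 0 \<or> a = 3 then 0 else 1) + mm s" by (simp add: mm_def)

lemma sum_mm: "4 * (\<Sum>x1\<in>bitvecs k. \<Sum>x2\<in>bitvecs k. \<Sum>x3\<in>bitvecs k. mm (vsum3 x1 x2 x3)) = 3 * k * 8 ^ k"
proof (induction k)
  case 0 show ?case by (simp add: mm_def)
next
  case (Suc k)
  let ?S = "\<Sum>x1\<in>bitvecs k. \<Sum>x2\<in>bitvecs k. \<Sum>x3\<in>bitvecs k. mm (vsum3 x1 x2 x3)"
  have c: "card (bitvecs k) = 2^k" by (rule card_bitvecs)
  have "(\<Sum>x1\<in>bitvecs (Suc k). \<Sum>x2\<in>bitvecs (Suc k). \<Sum>x3\<in>bitvecs (Suc k). mm (vsum3 x1 x2 x3))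
     = 6 * 8^k + 8 * ?S"
    by (simp add: sum_bitvecs_Suc mm_Cons sum.distrib sum_Suc c power_mult_distrib[symmetric] 
          flip: sum_distrib_left)
  then show ?case using Suc.IH by (simp add: algebra_simps)
qed



lemma stopD:
  assumes code: "zero_error_vl_code k \<phi>1 \<phi>2 N \<psi>"
    and "x1 \<in> bitvecs k" "x2 \<in> bitvecs k" "x3 \<in> bitvecs k"
    and "y1 \<in> bitvecs k" "y2 \<in> bitvecs k" "y3 \<in> bitvecs k"
    and "take n (\<phi>1 x1 x3) = take n (\<phi>1 y1 y3)" "take n (\<phi>2 x2 x3) = take n (\<phi>2 y2 y3)"
    and "N x1 x2 x3 = n"
  shows "N y1 y2 y3 = n"
  using code assms(2-) unfolding zero_error_vl_code_def by blast

lemma decD: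
  assumes code: "zero_error_vl_code k \<phi>1 \<phi>2 N \<psi>"
    and "x1 \<in> bitvecs k" "x2 \<in> bitvecs k" "x3 \<in> bitvecs k"
  shows "1 \<le> N x1 x2 x3" "N x1 x2 x3 \<le> length (\<phi>1 x1 x3)" "N x1 x2 x3 \<le> length (\<phi>2 x2 x3)"
    "\<psi> (take (N x1 x2 x3) (\<phi>1 x1 x3)) (take (N x1 x2 x3) (\<phi>2 x2 x3)) = vsum3 x1 x2 x3"
  using code assms(2-) unfolding zero_error_vl_code_def by blast+

lemma pairwise_same:
  assumes code: "zero_error_vl_code k \<phi>1 \<phi>2 N \<psi>"
    and B: "x1 \<in> bitvecs k" "x2 \<in> bitvecs k" "x3 \<in> bitvecs k"
       "y1 \<in> bitvecs k" "y2 \<in> bitvecs k" "y3 \<in> bitvecs k"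
    and ex: "take (N x1 x2 x3) u = take (N x1 x2 x3) (\<phi>1 x1 x3)" "take (N x1 x2 x3) v = take (N x1 x2 x3) (\<phi>2 x2 x3)"
    and ey: "take (N y1 y2 y3) u = take (N y1 y2 y3) (\<phi>1 y1 y3)" "take (N y1 y2 y3) v = take (N y1 y2 y3) (\<phi>2 y2 y3)"
    and le: "N x1 x2 x3 \<le> N y1 y2 y3"
  shows "N y1 y2 y3 = N x1 x2 x3"
proof -
  let ?n = "N x1 x2 x3" and ?m = "N y1 y2 y3"
  have "take ?n (\<phi>1 y1 y3) = take ?n (take ?m (\<phi>1 y1 y3))" using le by (simp add: min_def)
  also have "\<dots> = take ?n (take ?m u)" using ey by simp
  also have "\<dots> = take ?n u" using le by (simp add: min_def)
  finally have 1: "take ?n (\<phi>1 x1 x3) = take ?n (\<phi>1 y1 y3)" using ex by simp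
  have "take ?n (\<phi>2 y2 y3) = take ?n (take ?m (\<phi>2 y2 y3))" using le by (simp add: min_def)
  also have "\<dots> = take ?n (take ?m v)" using ey by simp
  also have "\<dots> = take ?n v" using le by (simp add: min_def)
  finally have 2: "take ?n (\<phi>2 x2 x3) = take ?n (\<phi>2 y2 y3)" using ex by simp
  show ?thesis by (rule stopD[OF code B 1 2 refl])
qed

lemma same_transcript:
  assumes code: "zero_error_vl_code k \<phi>1 \<phi>2 N \<psi>"
    and B: "x1 \<in> bitvecs k" "x2 \<in> bitvecs k" "x3 \<in> bitvecs k"
       "y1 \<in> bitvecs k" "y2 \<in> bitvecs k" "y3 \<in> bitvecs k"
    and ex: "take (N x1 x2 x3) u = take (N x1 x2 x3) (\<phi>1 x1 x3)" "take (N x1 x2 x3) v = take (N x1 x2 x3) (\<phi>2 x2 x3)"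
    and ey: "take (N y1 y2 y3) u = take (N y1 y2 y3) (\<phi>1 y1 y3)" "take (N y1 y2 y3) v = take (N y1 y2 y3) (\<phi>2 y2 y3)"
  shows "N y1 y2 y3 = N x1 x2 x3"
    "take (N x1 x2 x3) (\<phi>1 x1 x3) = take (N y1 y2 y3) (\<phi>1 y1 y3)"
    "take (N x1 x2 x3) (\<phi>2 x2 x3) = take (N y1 y2 y3) (\<phi>2 y2 y3)"
proof -
  show eq: "N y1 y2 y3 = N x1 x2 x3"
  proof (cases "N x1 x2 x3 \<le> N y1 y2 y3")
    case True then show ?thesis by (rule pairwise_same[OF code B ex ey])
  next
    case False then show ?thesis
      using pairwise_same[OF code B(4-6) B(1-3) ey ex] by simp
  qed
  show "take (N x1 x2 x3) (\<phi>1 x1 x3) = take (N y1 y2 y3) (\<phi>1 y1 y3)" using ex ey eq by simp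
  show "take (N x1 x2 x3) (\<phi>2 x2 x3) = take (N y1 y2 y3) (\<phi>2 y2 y3)" using ex ey eq by simp
qed

lemma same_x3:
  assumes code: "zero_error_vl_code k \<phi>1 \<phi>2 N \<psi>"
    and B: "x1 \<in> bitvecs k" "x2 \<in> bitvecs k" "x3 \<in> bitvecs k"
       "y1 \<in> bitvecs k" "y2 \<in> bitvecs k"
    and ex: "take (N x1 x2 x3) u = take (N x1 x2 x3) (\<phi>1 x1 x3)" "take (N x1 x2 x3) v = take (N x1 x2 x3) (\<phi>2 x2 x3)"
    and ey: "take (N y1 y2 x3) u = take (N y1 y2 x3) (\<phi>1 y1 x3)" "take (N y1 y2 x3) v = take (N y1 y2 x3) (\<phi>2 y2 x3)"
  shows "x1 = y1 \<and> x2 = y2"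
proof -
  note st = same_transcript[OF code B B(3) ex ey]
  let ?n = "N x1 x2 x3"
  have n: "N y1 y2 x3 = ?n" by (rule st(1))
  have p2: "take ?n (\<phi>2 x2 x3) = take ?n (\<phi>2 y2 x3)" using st(3) n by simp
  have nz: "N x1 y2 x3 = ?n"
    by (rule stopD[OF code B(1-3) B(1) B(5) B(3) refl p2 refl])
  have "vsum3 x1 y2 x3 = \<psi> (take ?n (\<phi>1 x1 x3)) (take ?n (\<phi>2 y2 x3))"
    using decD(4)[OF code B(1) B(5) B(3)] nz by simp
  also have "\<dots> = vsum3 x1 x2 x3" using decD(4)[OF code B(1-3)] p2 by simp
  finally have "vsum3 x1 x2 x3 = vsum3 x1 y2 x3" by simp
  then have e2: "x2 = y2" using vsum3_cancel2[of x2 x1 y2 x3] B by (auto simp: bitvecs_def)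
  have "vsum3 x1 x2 x3 = \<psi> (take ?n (\<phi>1 x1 x3)) (take ?n (\<phi>2 x2 x3))"
    using decD(4)[OF code B(1-3)] by simp
  also have "\<dots> = vsum3 y1 y2 x3" using decD(4)[OF code B(4) B(5) B(3)] st n by simp
  finally have "vsum3 x1 x2 x3 = vsum3 y1 x2 x3" using e2 by simp
  then have "x1 = y1" using vsum3_cancel1[of x2 x1 y1 x3] B by (auto simp: bitvecs_def)
  with e2 show ?thesis by simp
qed



lemma keyB:
  fixes u v :: "'z list" and \<phi>1 \<phi>2 :: "nat list \<Rightarrow> nat list \<Rightarrow> 'z list"
  assumes code: "zero_error_vl_code k \<phi>1 \<phi>2 N \<psi>"
  defines "D \<equiv> {x \<in> bitvecs k \<times> bitvecs k \<times> bitvecs k. case x of (x1,x2,x3) \<Rightarrow>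
      take (N x1 x2 x3) u = take (N x1 x2 x3) (\<phi>1 x1 x3) \<and> take (N x1 x2 x3) v = take (N x1 x2 x3) (\<phi>2 x2 x3)}"
  shows "(\<Sum>x\<in>D. (1/2::real) ^ mm (case x of (x1,x2,x3) \<Rightarrow> vsum3 x1 x2 x3)) \<le> 1"
proof (cases "D = {}")
  case True then show ?thesis by simp
next
  case False
  then obtain a1 a2 a3 where a: "(a1,a2,a3) \<in> D" by auto
  have aB: "a1 \<in> bitvecs k" "a2 \<in> bitvecs k" "a3 \<in> bitvecs k"
    and ea: "take (N a1 a2 a3) u = take (N a1 a2 a3) (\<phi>1 a1 a3)" "take (N a1 a2 a3) v = take (N a1 a2 a3) (\<phi>2 a2 a3)"
    using a by (auto simp: D_def)
  define s0 where "s0 = vsum3 a1 a2 a3"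
  have sig: "(case x of (x1,x2,x3) \<Rightarrow> vsum3 x1 x2 x3) = s0" if "x \<in> D" for x
  proof -
    obtain x1 x2 x3 where x: "x = (x1,x2,x3)" by (cases x) auto
    have xB: "x1 \<in> bitvecs k" "x2 \<in> bitvecs k" "x3 \<in> bitvecs k"
      and ex: "take (N x1 x2 x3) u = take (N x1 x2 x3) (\<phi>1 x1 x3)" "take (N x1 x2 x3) v = take (N x1 x2 x3) (\<phi>2 x2 x3)"
      using that x by (auto simp: D_def)
    note st = same_transcript[OF code aB xB ea ex]
    have "vsum3 x1 x2 x3 = vsum3 a1 a2 a3"
      using decD(4)[OF code xB] decD(4)[OF code aB] st by simp
    then show ?thesis using x s0_def by simp
  qed
  have finD: "finite D" unfolding D_def by simp
  have inj: "inj_on (\<lambda>x. snd (snd x)) D"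
  proof (rule inj_onI)
    fix x y assume xD: "x \<in> D" and yD: "y \<in> D" and eq: "snd (snd x) = snd (snd y)"
    obtain x1 x2 x3 where x: "x = (x1,x2,x3)" by (cases x) auto
    obtain y1 y2 y3 where y: "y = (y1,y2,y3)" by (cases y) auto
    have "x3 = y3" using eq x y by simp
    have xB: "x1 \<in> bitvecs k" "x2 \<in> bitvecs k" "x3 \<in> bitvecs k"
      and ex: "take (N x1 x2 x3) u = take (N x1 x2 x3) (\<phi>1 x1 x3)" "take (N x1 x2 x3) v = take (N x1 x2 x3) (\<phi>2 x2 x3)"
      using xD x by (auto simp: D_def)
    have yB: "y1 \<in> bitvecs k" "y2 \<in> bitvecs k"
      and ey: "take (N y1 y2 x3) u = take (N y1 y2 x3) (\<phi>1 y1 x3)" "take (N y1 y2 x3) v = take (N y1 y2 x3) (\<phi>2 y2 x3)"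
      using yD y \<open>x3 = y3\<close> by (auto simp: D_def)
    show "x = y" using same_x3[OF code xB yB ex ey] x y \<open>x3 = y3\<close> by simp
  qed
  have len: "length s0 = k" using aB by (simp add: s0_def length_vsum3 bitvecs_def)
  have img: "(\<lambda>x. snd (snd x)) ` D \<subseteq> {c \<in> bitvecs (length s0). compat s0 c}"
  proof
    fix c assume "c \<in> (\<lambda>x. snd (snd x)) ` D"
    then obtain x1 x2 x3 where xD: "(x1,x2,x3) \<in> D" and c: "c = x3" by auto
    have xB: "x1 \<in> bitvecs k" "x2 \<in> bitvecs k" "x3 \<in> bitvecs k" using xD by (auto simp: D_def)
    have "vsum3 x1 x2 x3 = s0" using sig[OF xD] by simp
    then show "c \<in> {c \<in> bitvecs (length s0). compat s0 c}"
      using compat_vsum3[OF xB] xB c len by auto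
  qed
  have "card D = card ((\<lambda>x. snd (snd x)) ` D)" using card_image[OF inj] by simp
  also have "\<dots> \<le> card {c \<in> bitvecs (length s0). compat s0 c}"
    by (rule card_mono[OF _ img]) simp
  also have "\<dots> \<le> 2 ^ mm s0" by (rule card_compat)
  finally have cD: "card D \<le> 2 ^ mm s0" .
  have "(\<Sum>x\<in>D. (1/2::real) ^ mm (case x of (x1,x2,x3) \<Rightarrow> vsum3 x1 x2 x3)) = (\<Sum>x\<in>D. (1/2::real) ^ mm s0)"
    by (rule sum.cong) (auto simp: sig)
  also have "\<dots> = real (card D) * (1/2) ^ mm s0" by simp
  also have "\<dots> \<le> 2 ^ mm s0 * (1/2) ^ mm s0"
    by (rule mult_right_mono) (use cD in \<open>simp_all add: of_nat_le_iff[symmetric]\<close>)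
  also have "\<dots> = 1" by (simp add: power_mult_distrib[symmetric])
  finally show ?thesis .
qed



lemma card_lists_UNIV: "card {u::'z::finite list. length u = M} = card (UNIV::'z set) ^ M"
  using card_lists_length_eq[of "UNIV::'z set" M] by simp

lemma finite_lists_UNIV: "finite {u::'z::finite list. length u = M}"
  using finite_lists_length_eq[of "UNIV::'z set" M] by simp

lemma card_ext:
  fixes a :: "'z::finite list"
  assumes "length a = n" "n \<le> M"
  shows "card {u. length u = M \<and> take n u = a} = card (UNIV::'z set) ^ (M - n)"
proof -
  have eq: "{u. length u = M \<and> take n u = a} = (\<lambda>r. a @ r) ` {r. length r = M - n}"
  proof (rule set_eqI)
    fix u show "u \<in> {u. length u = M \<and> take n u = a} \<longleftrightarrow> u \<in> (\<lambda>r. a @ r) ` {r. length r = M - n}"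
    proof
      assume "u \<in> {u. length u = M \<and> take n u = a}"
      then have "u = a @ drop n u" "length (drop n u) = M - n" using append_take_drop_id[of n u] by auto
      then show "u \<in> (\<lambda>r. a @ r) ` {r. length r = M - n}" by blast
    next
      assume "u \<in> (\<lambda>r. a @ r) ` {r. length r = M - n}"
      then show "u \<in> {u. length u = M \<and> take n u = a}" using assms by auto
    qed
  qed
  have "inj_on (\<lambda>r. a @ r) {r. length r = M - n}" by (auto simp: inj_on_def)
  then show ?thesis unfolding eq by (simp add: card_image card_lists_UNIV)
qed

lemma kraft:
  fixes \<phi>1 \<phi>2 :: "nat list \<Rightarrow> nat list \<Rightarrow> 'z::finite list"
  assumes code: "zero_error_vl_code k \<phi>1 \<phi>2 N \<psi>"
  shows "(\<Sum>x\<in>bitvecs k \<times> bitvecs k \<times> bitvecs k.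
           (1/2::real) ^ mm (case x of (x1,x2,x3) \<Rightarrow> vsum3 x1 x2 x3)
           * ((1 / real (card (UNIV::'z set))) ^ (case x of (x1,x2,x3) \<Rightarrow> N x1 x2 x3)
           * (1 / real (card (UNIV::'z set))) ^ (case x of (x1,x2,x3) \<Rightarrow> N x1 x2 x3))) \<le> 1"
proof -
  define X where "X = bitvecs k \<times> bitvecs k \<times> bitvecs k"
  define q where "q = card (UNIV::'z set)"
  define n where "n = (\<lambda>x. case x of (x1,x2,x3) \<Rightarrow> N x1 x2 x3)"
  define c where "c = (\<lambda>x. (1/2::real) ^ mm (case x of (x1,x2,x3) \<Rightarrow> vsum3 x1 x2 x3))"
  have q0: "q > 0" unfolding q_def by (simp add: finite_UNIV_card_ge_0)
  have finX: "finite X" unfolding X_def by simp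
  define M where "M = Max (n ` X)"
  have nM: "n x \<le> M" if "x \<in> X" for x unfolding M_def using finX that by simp
  define Wl where "Wl = {u::'z list. length u = M}"
  define W where "W = Wl \<times> Wl"
  have finW: "finite W" unfolding W_def Wl_def by (intro finite_cartesian_product finite_lists_UNIV)
  have cW: "card W = q^M * q^M" unfolding W_def Wl_def q_def by (simp add: card_cartesian_product card_lists_UNIV)
  define R where "R = (\<lambda>x (w::'z list \<times> 'z list). case x of (x1,x2,x3) \<Rightarrow>
      take (N x1 x2 x3) (fst w) = take (N x1 x2 x3) (\<phi>1 x1 x3) \<and> take (N x1 x2 x3) (snd w) = take (N x1 x2 x3) (\<phi>2 x2 x3))"
  have cE: "card {w\<in>W. R x w} = q^(M - n x) * q^(M - n x)" if xX: "x \<in> X" for x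
  proof -
    obtain x1 x2 x3 where x: "x = (x1,x2,x3)" by (cases x) auto
    have xB: "x1 \<in> bitvecs k" "x2 \<in> bitvecs k" "x3 \<in> bitvecs k" using xX x by (auto simp: X_def)
    note d = decD[OF code xB]
    have "{w\<in>W. R x w} = {u. length u = M \<and> take (N x1 x2 x3) u = take (N x1 x2 x3) (\<phi>1 x1 x3)}
        \<times> {v. length v = M \<and> take (N x1 x2 x3) v = take (N x1 x2 x3) (\<phi>2 x2 x3)}"
      by (auto simp: W_def Wl_def R_def x)
    moreover have "N x1 x2 x3 \<le> M" using nM[OF xX] x by (simp add: n_def)
    ultimately show ?thesis using d unfolding q_def
      by (simp add: card_cartesian_product card_ext n_def x min_def)
  qed
  have key: "(\<Sum>x\<in>{x\<in>X. R x w}. c x) \<le> 1" for w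
  proof -
    obtain u v where w: "w = (u,v)" by (cases w) auto
    show ?thesis using keyB[OF code, of u v] by (simp add: w R_def X_def c_def)
  qed
  have "(\<Sum>x\<in>X. c x * real (card {w\<in>W. R x w})) = (\<Sum>x\<in>X. \<Sum>w\<in>{w\<in>W. R x w}. c x)"
    by (simp add: mult.commute)
  also have "\<dots> = (\<Sum>w\<in>W. \<Sum>x\<in>{x\<in>X. R x w}. c x)"
    by (rule sum.swap_restrict[OF finX finW])
  also have "\<dots> \<le> (\<Sum>w\<in>W. 1)" by (rule sum_mono) (rule key)
  also have "\<dots> = real q^M * real q^M" using cW by simp
  finally have A: "(\<Sum>x\<in>X. c x * real (card {w\<in>W. R x w})) \<le> real q^M * real q^M" .
  have B: "c x * real (card {w\<in>W. R x w}) = (real q^M * real q^M) * (c x * ((1 / real q) ^ n x * (1 / real q) ^ n x))"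
    if xX: "x \<in> X" for x
  proof -
    have "real q ^ (M - n x) = real q ^ M / real q ^ n x" using q0 nM[OF xX] by (simp add: power_diff)
    then show ?thesis using cE[OF xX] by (simp add: power_one_over field_simps)
  qed
  have "(real q^M * real q^M) * (\<Sum>x\<in>X. c x * ((1 / real q) ^ n x * (1 / real q) ^ n x)) \<le> (real q^M * real q^M) * 1"
    using A by (simp add: sum_distrib_left B)
  then have "(\<Sum>x\<in>X. c x * ((1 / real q) ^ n x * (1 / real q) ^ n x)) \<le> 1"
    using q0 by (simp add: mult_le_cancel_left_pos)
  then show ?thesis by (simp add: X_def c_def n_def q_def)
qed




lemma sum3: "(\<Sum>x\<in>A\<times>B\<times>C. f x) = (\<Sum>a\<in>A. \<Sum>b\<in>B. \<Sum>c\<in>C. f (a,b,c))"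
  by (simp add: sum.cartesian_product)

lemma log2_le: "0 < (y::real) \<Longrightarrow> log 2 y \<le> (y - 1) / ln 2"
  unfolding log_def by (rule divide_right_mono) (simp_all add: ln_le_minus_one)

lemma main_bound:
  fixes \<phi>1 \<phi>2 :: "nat list \<Rightarrow> nat list \<Rightarrow> 'z::finite list"
  assumes code: "zero_error_vl_code k \<phi>1 \<phi>2 N \<psi>" and q2: "card (UNIV::'z set) \<ge> 2"
  shows "9 * real k \<le> 8 * (expected_N k N * log 2 (real (card (UNIV::'z set))))"
proof -
  define X where "X = bitvecs k \<times> bitvecs k \<times> bitvecs k"
  define q where "q = real (card (UNIV::'z set))"
  define L where "L = log 2 q"
  define n where "n = (\<lambda>x. case x of (x1,x2,x3) \<Rightarrow> N x1 x2 x3)"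
  define m where "m = (\<lambda>x. mm (case x of (x1,x2,x3) \<Rightarrow> vsum3 x1 x2 x3))"
  define c where "c = (\<lambda>x. (1/2::real) ^ m x * ((1 / q) ^ n x * (1 / q) ^ n x))"
  define T where "T = (2::real) ^ (3*k)"
  have q2': "q \<ge> 2" using q2 unfolding q_def by simp
  have L1: "L \<ge> 1" unfolding L_def using q2' by simp
  have T0: "T > 0" unfolding T_def by simp
  have finX: "finite X" unfolding X_def by simp
  have cX0: "real (card X) = 2^k * 2^k * 2^k"
    unfolding X_def by (simp add: card_cartesian_product card_bitvecs)
  have "(2::real)^k * 2^k * 2^k = 2^(3*k)"
    by (simp add: power_mult flip: power_mult_distrib)
  then have cX: "real (card X) = T" using cX0 T_def by simp
  have S: "(\<Sum>x\<in>X. c x) \<le> 1"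
    using kraft[OF code] unfolding X_def c_def m_def n_def q_def by simp
  have c0: "c x > 0" for x unfolding c_def using q2' by simp
  have lg: "log 2 (T * c x) = 3 * real k - real (m x) - 2 * real (n x) * L" for x
  proof -
    have "log 2 (T * c x) = log 2 T + log 2 ((1/2) ^ m x) + log 2 ((1 / q) ^ n x) + log 2 ((1 / q) ^ n x)"
      unfolding c_def using T0 q2' by (simp add: log_mult_pos)
    also have "\<dots> = 3 * real k - real (m x) - 2 * real (n x) * L"
      unfolding T_def L_def using q2' by (simp add: log_nat_power log_recip)
    finally show ?thesis .
  qed
  have "(\<Sum>x\<in>X. 3 * real k - real (m x) - 2 * real (n x) * L) = (\<Sum>x\<in>X. log 2 (T * c x))"
    by (simp add: lg)
  also have "\<dots> \<le> (\<Sum>x\<in>X. (T * c x - 1) / ln 2)"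
    by (rule sum_mono) (rule log2_le, simp add: T0 c0)
  also have "\<dots> = (T * (\<Sum>x\<in>X. c x) - real (card X)) / ln 2"
    by (simp add: sum_divide_distrib[symmetric] sum_subtractf sum_distrib_left)
  also have "\<dots> \<le> 0"
    using S T0 cX by (simp add: divide_nonpos_pos mult_le_cancel_left_pos)
  finally have main: "(\<Sum>x\<in>X. 3 * real k - real (m x) - 2 * real (n x) * L) \<le> 0" .
  have sm: "4 * (\<Sum>x\<in>X. real (m x)) = 3 * real k * T"
  proof -
    have "(\<Sum>x\<in>X. real (m x)) = real (\<Sum>x1\<in>bitvecs k. \<Sum>x2\<in>bitvecs k. \<Sum>x3\<in>bitvecs k. mm (vsum3 x1 x2 x3))"
      unfolding X_def m_def by (simp add: sum3)
    moreover have "real (4 * (\<Sum>x1\<in>bitvecs k. \<Sum>x2\<in>bitvecs k. \<Sum>x3\<in>bitvecs k. mm (vsum3 x1 x2 x3))) = real (3 * k * 8 ^ k)"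
      using sum_mm by metis
    ultimately show ?thesis unfolding T_def by (simp add: power_mult)
  qed
  have sn: "(\<Sum>x\<in>X. real (n x)) = expected_N k N * T"
    unfolding expected_N_def X_def n_def T_def by (simp add: sum3)
  have e1: "(\<Sum>x\<in>X. 3 * real k - real (m x) - 2 * real (n x) * L)
      = (\<Sum>x\<in>X. 3 * real k) - (\<Sum>x\<in>X. real (m x)) - (\<Sum>x\<in>X. 2 * real (n x) * L)"
    by (simp add: sum_subtractf)
  have e2: "(\<Sum>x\<in>X. 2 * real (n x) * L) = 2 * L * (\<Sum>x\<in>X. real (n x))"
    by (simp add: sum_distrib_left mult_ac)
  have "(\<Sum>x\<in>X. 3 * real k - real (m x) - 2 * real (n x) * L)
      = 3 * real k * real (card X) - (\<Sum>x\<in>X. real (m x)) - 2 * L * (\<Sum>x\<in>X. real (n x))"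
    unfolding e1 e2 by simp
  with main sm sn cX have "T * (9 * real k) \<le> T * (8 * (expected_N k N * L))"
    by (simp add: algebra_simps)
  then show ?thesis using T0 unfolding L_def q_def by simp
qed

theorem mainTheorem13:
  assumes "card (UNIV :: 'z::finite set) \<ge> 2"
  shows "\<forall>\<epsilon>>0. \<exists>k0::nat. \<forall>k\<ge>k0.
           \<forall>(\<phi>1 :: nat list \<Rightarrow> nat list \<Rightarrow> 'z list) (\<phi>2 :: nat list \<Rightarrow> nat list \<Rightarrow> 'z list) N \<psi>.
             zero_error_vl_code k \<phi>1 \<phi>2 N \<psi> \<longrightarrow>
             real k / (expected_N k N * log 2 (real (card (UNIV :: 'z set)))) \<le> 8 / 9 + \<epsilon>"
proof (intro allI impI exI[of _ 0])
  fix \<epsilon> :: real and k :: nat and \<phi>1 \<phi>2 :: "nat list \<Rightarrow> nat list \<Rightarrow> 'z list" and N \<psi>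
  assume e: "\<epsilon> > 0" and code: "zero_error_vl_code k \<phi>1 \<phi>2 N \<psi>"
  let ?D = "expected_N k N * log 2 (real (card (UNIV :: 'z set)))"
  have b: "9 * real k \<le> 8 * ?D" by (rule main_bound[OF code assms])
  show "real k / ?D \<le> 8 / 9 + \<epsilon>"
  proof (cases "k = 0")
    case True then show ?thesis using e by simp
  next
    case False
    then have D: "?D > 0" using b by simp
    have "real k / ?D \<le> 8 / 9" by (subst pos_divide_le_eq[OF D]) (use b in linarith)
    then show ?thesis using e by linarith
  qed
qed


end
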